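(* Let $0<q<1$. For complex numbers $a,b,c,d$ with $\mathrm{Re}(a+b+c+d)>0$, and such that every $q^2$-gamma value occurring below is evaluated at a point that is not a non-positive integer, \[ \sum_{n=0}^{\infty}\frac{(1-q^{4n+2a+1})(1/2|q^{2})_{a+n}(1/2|q^{2})_{n-b}(1/3|q^{2})_{n-c}(2/3|q^{2})_{n-d}}{(1-q^{2})[n]_{q^{2}}!\,(1|q^{2})_{a+b+n}(7/6|q^{2})_{a+c+n}(5/6|q^{2})_{a+d+n}}\,q^{2(a+b+c+d)n} \] \[ =\frac{(1/2|q^{2})_{-b}(1/3|q^{2})_{-c}(2/3|q^{2})_{-d}(1|q^{2})_{a+b+c+d-1}}{(1/3|q^{2})_{a+b+d}(2/3|q^{2})_{a+b+c}(1/2|q^{2})_{a+c+d}}\cdot\frac{[1/6]_{q^{2}}\,(q^{4/3},q^{2/3};q^{2})_{\infty}\,q^{1/4}}{(q^{1/3},q^{5/3};q^{2})_{\infty}\,\pi_{q}}. \]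
   Context: Let $0<q<1$ and write $q^{x}=e^{x\log q}$. $(z;q)_\infty=\prod_{k\ge0}(1-zq^k)$, $(z_1,z_2;q)_\infty=(z_1;q)_\infty(z_2;q)_\infty$. $\Gamma_{q^2}(x)=\frac{(q^2;q^2)_\infty}{(q^{2x};q^2)_\infty}(1-q^2)^{1-x}$; for complex $x,\alpha$, $(x|q^2)_\alpha=\Gamma_{q^2}(x+\alpha)/\Gamma_{q^2}(x)$. $[z]_{q^2}=\frac{1-q^{2z}}{1-q^2}$, $[0]_{q^2}!=1$, $[n]_{q^2}!=\prod_{k=1}^n[k]_{q^2}$. $\pi_q=(1-q^2)q^{1/4}\frac{(q^2;q^2)_\infty^2}{(q;q^2)_\infty^2}$. *)

theory Defs
  imports "HOL-Analysis.Analysis"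
begin

definition qpow :: "real \<Rightarrow> complex \<Rightarrow> complex" where
  "qpow q x = exp (x * of_real (ln q))"

definition qpoch_inf :: "complex \<Rightarrow> real \<Rightarrow> complex" where
  "qpoch_inf z p = (\<Prod>k. 1 - z * of_real (p ^ k))"

definition qgamma2 :: "real \<Rightarrow> complex \<Rightarrow> complex" where
  "qgamma2 q x = qpoch_inf (of_real (q^2)) (q^2) / qpoch_inf (qpow q (2 * x)) (q^2)
                 * exp ((1 - x) * of_real (ln (1 - q^2)))"

definition qshift2 :: "real \<Rightarrow> complex \<Rightarrow> complex \<Rightarrow> complex" where
  "qshift2 q x \<alpha> = qgamma2 q (x + \<alpha>) / qgamma2 q x"

definition qnum2 :: "real \<Rightarrow> complex \<Rightarrow> complex" where
  "qnum2 q z = (1 - qpow q (2 * z)) / of_real (1 - q^2)"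

definition qfact2 :: "real \<Rightarrow> nat \<Rightarrow> complex" where
  "qfact2 q n = (\<Prod>k=1..n. qnum2 q (of_nat k))"

definition pi_q :: "real \<Rightarrow> complex" where
  "pi_q q = of_real (1 - q^2) * qpow q (1/4) * qpoch_inf (of_real (q^2)) (q^2) ^ 2
            / qpoch_inf (of_real q) (q^2) ^ 2"

definition qgamma2_pole :: "real \<Rightarrow> complex \<Rightarrow> bool" where
  "qgamma2_pole q x \<longleftrightarrow> qpoch_inf (qpow q (2 * x)) (q^2) = 0"

end

theory Submission
  imports Defs
begin

definition qp :: "complex \<Rightarrow> real \<Rightarrow> nat \<Rightarrow> complex" where
  "qp w p n = (\<Prod>k<n. 1 - w * of_real (p ^ k))"

lemma qp_0[simp]: "qp w p 0 = 1" by (simp add: qp_def)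
lemma qp_Suc: "qp w p (Suc n) = qp w p n * (1 - w * of_real (p ^ n))"
  by (simp add: qp_def)

lemma qp_add: "qp w p (m + n) = qp w p m * qp (w * of_real (p ^ m)) p n"
  by (induction n) (simp_all add: qp_Suc power_add mult_ac)

lemma qp_Suc': "qp w p (Suc n) = (1 - w) * qp (w * of_real p) p n"
  using qp_add[of w p 1 n] by (simp add: qp_def)

lemma qpoch_conv:
  fixes w :: complex
  assumes "0 < p" "p < 1"
  shows "convergent_prod (\<lambda>k. 1 - w * of_real (p ^ k))"
proof -
  have "summable (\<lambda>k. norm w * p ^ k)"
    using assms by (intro summable_mult summable_geometric) auto
  then have "summable (\<lambda>k. norm ((1 - w * of_real (p ^ k)) - 1))"
    using assms by (simp add: norm_mult norm_power)
  then show ?thesis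
    by (intro abs_convergent_prod_imp_convergent_prod summable_imp_abs_convergent_prod)
qed

lemma qp_lim:
  assumes "0 < p" "p < 1"
  shows "(\<lambda>n. qp w p n) \<longlonglongrightarrow> qpoch_inf w p"
proof -
  have "(\<lambda>n. \<Prod>i\<le>n. 1 - w * of_real (p ^ i)) \<longlonglongrightarrow> qpoch_inf w p"
    unfolding qpoch_inf_def by (rule convergent_prod_LIMSEQ[OF qpoch_conv[OF assms]])
  then have "(\<lambda>n. qp w p (Suc n)) \<longlonglongrightarrow> qpoch_inf w p"
    by (simp add: qp_def lessThan_Suc_atMost)
  then show ?thesis by (simp add: filterlim_sequentially_Suc)
qed

lemma qpinf_shift:
  assumes "0 < p" "p < 1"
  shows "qpoch_inf w p = qp w p m * qpoch_inf (w * of_real (p ^ m)) p"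
proof -
  have "(\<lambda>n. qp w p (n + m)) \<longlonglongrightarrow> qpoch_inf w p"
    by (rule LIMSEQ_ignore_initial_segment[OF qp_lim[OF assms]])
  moreover have "(\<lambda>n. qp w p (n + m)) \<longlonglongrightarrow> qp w p m * qpoch_inf (w * of_real (p ^ m)) p"
    by (subst add.commute, subst qp_add) (intro tendsto_mult tendsto_const qp_lim assms)
  ultimately show ?thesis by (rule LIMSEQ_unique)
qed

lemma qpinf_Suc:
  assumes "0 < p" "p < 1"
  shows "qpoch_inf w p = (1 - w) * qpoch_inf (w * of_real p) p"
  using qpinf_shift[OF assms, of w 1] by (simp add: qp_def)

lemma qpinf_nz_factor:
  assumes "0 < p" "p < 1" "qpoch_inf w p \<noteq> 0"
  shows "1 - w * of_real (p ^ k) \<noteq> 0"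
  using qpinf_shift[OF assms(1,2), of w "Suc k"] assms(3) by (auto simp: qp_Suc)

lemma qpinf_nz_qp:
  assumes "0 < p" "p < 1" "qpoch_inf w p \<noteq> 0"
  shows "qp w p n \<noteq> 0"
  using qpinf_shift[OF assms(1,2), of w n] assms(3) by auto

lemma qpinf_nonzero:
  assumes "0 < p" "p < 1" "\<And>k. 1 - w * of_real (p ^ k) \<noteq> 0"
  shows "qpoch_inf w p \<noteq> 0"
  unfolding qpoch_inf_def by (rule prodinf_nonzero[OF qpoch_conv[OF assms(1,2)] assms(3)])

lemma inf_pos:
  fixes w :: complex
  assumes "0 < p" "p < 1" "\<And>k. 1 - w * of_real (p ^ k) \<noteq> 0"
  shows "\<exists>\<delta>>0. \<forall>k. \<delta> \<le> norm (1 - w * of_real (p ^ k))"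
proof -
  have "(\<lambda>k. norm w * p ^ k) \<longlonglongrightarrow> 0"
    using assms by (intro tendsto_mult_right_zero LIMSEQ_power_zero) auto
  from LIMSEQ_D[OF this, of "1/2"] obtain N where N0: "\<forall>k\<ge>N. norm (norm w * p ^ k - 0) < 1/2"
    by auto
  have N: "norm w * p ^ k < 1/2" if "k \<ge> N" for k
    using N0 that assms(1) by auto
  define S where "S = insert (1/2) ((\<lambda>k. norm (1 - w * of_real (p ^ k))) ` {..<N})"
  have fin: "finite S" and ne: "S \<noteq> {}" by (auto simp: S_def)
  have pos: "\<forall>x\<in>S. x > 0" using assms(3) by (auto simp: S_def)
  have "Min S > 0" using fin ne pos by auto
  moreover have "Min S \<le> norm (1 - w * of_real (p ^ k))" for k
  proof (cases "k < N")
    case True then show ?thesis using fin by (auto simp: S_def intro!: Min_le)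
  next
    case False
    have "norm (1 - w * of_real (p ^ k)) \<ge> 1 - norm (w * of_real (p ^ k))"
      using norm_triangle_ineq2[of 1 "w * of_real (p ^ k)"] by simp
    also have "norm (w * of_real (p ^ k)) = norm w * p ^ k"
      using assms by (simp add: norm_mult norm_power)
    finally have "norm (1 - w * of_real (p ^ k)) \<ge> 1/2" using N[of k] False by auto
    moreover have "Min S \<le> 1/2" using fin unfolding S_def by (intro Min_le) auto
    ultimately show ?thesis by linarith
  qed
  ultimately show ?thesis by blast
qed

definition tt :: "complex \<Rightarrow> complex \<Rightarrow> complex \<Rightarrow> complex \<Rightarrow> real \<Rightarrow> nat \<Rightarrow> complex" where
  "tt A b c d p n = qp A p n * qp b p n * qp c p n * qp d p n /
     (qp (of_real p) p n * qp (A * of_real p / b) p n * qp (A * of_real p / c) p n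
       * qp (A * of_real p / d) p n) * (A * of_real p / (b * c * d)) ^ n"

definition t6 :: "complex \<Rightarrow> complex \<Rightarrow> complex \<Rightarrow> complex \<Rightarrow> real \<Rightarrow> nat \<Rightarrow> complex" where
  "t6 A b c d p n = (1 - A * of_real p ^ (2 * n)) * tt A b c d p n"

definition rr :: "complex \<Rightarrow> complex \<Rightarrow> complex \<Rightarrow> complex \<Rightarrow> real \<Rightarrow> nat \<Rightarrow> complex" where
  "rr A b c d p n = (1 - A * of_real p ^ n) * (1 - b * of_real p ^ n) * (1 - c * of_real p ^ n)
      * (1 - d * of_real p ^ n) * (A * of_real p / (b * c * d))
    / ((1 - of_real p * of_real p ^ n) * (1 - A * of_real p / b * of_real p ^ n)
       * (1 - A * of_real p / c * of_real p ^ n) * (1 - A * of_real p / d * of_real p ^ n))"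

definition hyp :: "complex \<Rightarrow> complex \<Rightarrow> complex \<Rightarrow> complex \<Rightarrow> real \<Rightarrow> bool" where
  "hyp A b c d p \<longleftrightarrow> 0 < p \<and> p < 1 \<and> b \<noteq> 0 \<and> c \<noteq> 0 \<and> d \<noteq> 0
     \<and> (\<forall>k. 1 - A * of_real p / b * of_real p ^ k \<noteq> 0)
     \<and> (\<forall>k. 1 - A * of_real p / c * of_real p ^ k \<noteq> 0)
     \<and> (\<forall>k. 1 - A * of_real p / d * of_real p ^ k \<noteq> 0)
     \<and> norm (A * of_real p / (b * c * d)) < 1"

lemma qp_nz:
  assumes "\<And>k. 1 - w * of_real p ^ k \<noteq> 0"
  shows "qp w p n \<noteq> 0"
  using assms by (simp add: qp_def)

lemma pfac_nz:
  assumes "0 < p" "p < 1"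
  shows "1 - of_real p * (of_real p :: complex) ^ k \<noteq> 0"
proof
  assume "1 - of_real p * (of_real p :: complex) ^ k = 0"
  then have "of_real (p ^ Suc k) = (1::complex)" by simp
  then have "p ^ Suc k = 1" using of_real_eq_1_iff by blast
  moreover have "p ^ Suc k < 1" using assms by (intro power_Suc_less_one)
  ultimately show False by simp
qed

lemma hyp_nz:
  assumes "hyp A b c d p"
  shows "qp (of_real p) p n \<noteq> 0" "qp (A * of_real p / b) p n \<noteq> 0"
    "qp (A * of_real p / c) p n \<noteq> 0" "qp (A * of_real p / d) p n \<noteq> 0"
  using assms pfac_nz[of p] unfolding hyp_def
  by (auto intro!: qp_nz simp del: of_real_power)

lemma hyp_fac:
  assumes "hyp A b c d p"
  shows "1 - of_real p * (of_real p :: complex) ^ k \<noteq> 0"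
    "1 - A * of_real p / b * of_real p ^ k \<noteq> 0"
    "1 - A * of_real p / c * of_real p ^ k \<noteq> 0"
    "1 - A * of_real p / d * of_real p ^ k \<noteq> 0"
  using assms pfac_nz[of p] unfolding hyp_def
  by (auto intro!: qp_nz simp del: of_real_power)

lemma tt_Suc:
  assumes "hyp A b c d p"
  shows "tt A b c d p (Suc n) = tt A b c d p n * rr A b c d p n"
proof -
  note nz = hyp_nz[OF assms, of n] hyp_fac[OF assms, of n]
  show ?thesis
    unfolding tt_def rr_def qp_Suc
    using nz by (simp add: field_simps)
qed

lemma hyp_p: "hyp A b c d p \<Longrightarrow> 0 < p \<and> p < 1 \<and> b \<noteq> 0 \<and> c \<noteq> 0 \<and> d \<noteq> 0
   \<and> norm (A * of_real p / (b * c * d)) < 1"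
  by (simp add: hyp_def)

lemma rr_lim:
  assumes "hyp A b c d p"
  shows "(\<lambda>n. rr A b c d p n) \<longlonglongrightarrow> A * of_real p / (b * c * d)"
proof -
  have p: "0 < p" "p < 1" using hyp_p[OF assms] by auto
  have x: "(\<lambda>n. (of_real p :: complex) ^ n) \<longlonglongrightarrow> 0"
    using p by (intro LIMSEQ_power_zero) auto
  define F where "F = (\<lambda>x::complex. (1 - A * x) * (1 - b * x) * (1 - c * x)
      * (1 - d * x) * (A * of_real p / (b * c * d))
    / ((1 - of_real p * x) * (1 - A * of_real p / b * x)
       * (1 - A * of_real p / c * x) * (1 - A * of_real p / d * x)))"
  have "isCont F 0" unfolding F_def by (intro continuous_intros) auto
  from isCont_tendsto_compose[OF this x] have "(\<lambda>n. F (of_real p ^ n)) \<longlonglongrightarrow> F 0" .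
  moreover have "F 0 = A * of_real p / (b * c * d)" by (simp add: F_def)
  moreover have "F (of_real p ^ n) = rr A b c d p n" for n by (simp add: F_def rr_def)
  ultimately show ?thesis by simp
qed

lemma tt_summable:
  assumes "hyp A b c d p"
  shows "summable (\<lambda>n. norm (tt A b c d p n))"
proof -
  define z where "z = A * of_real p / (b * c * d)"
  have z1: "norm z < 1" using hyp_p[OF assms] by (simp add: z_def)
  define c0 where "c0 = (1 + norm z) / 2"
  have c0: "norm z < c0" "c0 < 1" using z1 by (auto simp: c0_def)
  have "(\<lambda>n. norm (rr A b c d p n)) \<longlonglongrightarrow> norm z"
    using rr_lim[OF assms] unfolding z_def by (rule tendsto_norm)
  from order_tendstoD(2)[OF this c0(1)] obtain N where
    N: "\<And>n. n \<ge> N \<Longrightarrow> norm (rr A b c d p n) < c0"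
    by (auto simp: eventually_sequentially)
  show ?thesis
  proof (rule summable_ratio_test[OF c0(2), of N])
    fix n assume "n \<ge> N"
    have "norm (norm (tt A b c d p (Suc n))) = norm (tt A b c d p n) * norm (rr A b c d p n)"
      by (simp add: tt_Suc[OF assms] norm_mult)
    also have "\<dots> \<le> norm (tt A b c d p n) * c0"
      using N[OF \<open>n \<ge> N\<close>] by (intro mult_left_mono) auto
    finally show "norm (norm (tt A b c d p (Suc n))) \<le> c0 * norm (norm (tt A b c d p n))"
      by (simp add: mult.commute)
  qed
qed

lemma tt_lim0:
  assumes "hyp A b c d p"
  shows "(\<lambda>n. tt A b c d p n) \<longlonglongrightarrow> 0"
  using summable_LIMSEQ_zero[OF tt_summable[OF assms]] by (simp add: tendsto_norm_zero_iff)

lemma t6_summable: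
  assumes "hyp A b c d p"
  shows "summable (\<lambda>n. norm (t6 A b c d p n))" "summable (t6 A b c d p)"
proof -
  have p: "0 < p" "p < 1" using hyp_p[OF assms] by auto
  have "norm (t6 A b c d p n) \<le> (1 + norm A) * norm (tt A b c d p n)" for n
  proof -
    have "norm (1 - A * of_real p ^ (2 * n)) \<le> 1 + norm (A * of_real p ^ (2 * n))"
      by (metis norm_one norm_triangle_ineq4)
    also have "norm (A * of_real p ^ (2 * n)) = norm A * p ^ (2 * n)"
      using p by (simp add: norm_mult norm_power)
    also have "\<dots> \<le> norm A * 1"
      using p by (intro mult_left_mono power_le_one) auto
    finally show ?thesis unfolding t6_def norm_mult
      by (intro mult_right_mono) auto
  qed
  then show "summable (\<lambda>n. norm (t6 A b c d p n))"
    by (intro summable_comparison_test[OF _ summable_mult[OF tt_summable[OF assms]]]) auto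
  then show "summable (t6 A b c d p)" by (rule summable_norm_cancel)
qed

lemma hyp_shift:
  assumes "hyp A b c d p"
  shows "hyp (A * of_real p) b c d p"
proof -
  have p: "0 < p" "p < 1" using hyp_p[OF assms] by auto
  have e: "A * of_real p * of_real p / e * of_real p ^ k = A * of_real p / e * of_real p ^ Suc k"
    for e k by (simp add: field_simps)
  have "norm (A * of_real p * of_real p / (b * c * d)) = norm (A * of_real p / (b * c * d)) * p"
    using p by (simp add: norm_mult norm_divide)
  also have "\<dots> \<le> norm (A * of_real p / (b * c * d))"
    using p by (intro mult_left_le) auto
  also have "\<dots> < 1" using hyp_p[OF assms] by simp
  finally have zn: "norm (A * of_real p * of_real p / (b * c * d)) < 1" .
  have h: "\<forall>k. 1 - A * of_real p / b * of_real p ^ k \<noteq> 0"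
     "\<forall>k. 1 - A * of_real p / c * of_real p ^ k \<noteq> 0"
     "\<forall>k. 1 - A * of_real p / d * of_real p ^ k \<noteq> 0"
     "b \<noteq> 0" "c \<noteq> 0" "d \<noteq> 0"
    using assms unfolding hyp_def by auto
  show ?thesis unfolding hyp_def e
    using p zn h by blast
qed

lemma shift_rel:
  assumes H: "hyp A b c d p"
  shows "(1 - A) * tt (A * of_real p) b c d p n = tt A b c d p n *
    ((1 - A * of_real p ^ n) * (1 - A * of_real p / b) * (1 - A * of_real p / c)
     * (1 - A * of_real p / d) * of_real p ^ n
     / ((1 - A * of_real p / b * of_real p ^ n) * (1 - A * of_real p / c * of_real p ^ n)
        * (1 - A * of_real p / d * of_real p ^ n)))"
proof (induction n)
  case 0
  have "1 - A * of_real p / b \<noteq> 0" "1 - A * of_real p / c \<noteq> 0" "1 - A * of_real p / d \<noteq> 0"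
    using hyp_fac(2-4)[OF H, of 0] by auto
  then show ?case by (simp add: tt_def)
next
  case (Suc n)
  define P where "P = (of_real p :: complex)"
  define x where "x = P ^ n"
  define B where "B = A * P / b"
  define C where "C = A * P / c"
  define D where "D = A * P / d"
  define z where "z = A * P / (b * c * d)"
  have bcd: "b \<noteq> 0" "c \<noteq> 0" "d \<noteq> 0" using hyp_p[OF H] by auto
  have nz: "1 - P * x \<noteq> 0" "1 - B * x \<noteq> 0" "1 - C * x \<noteq> 0" "1 - D * x \<noteq> 0"
    "1 - B * (P * x) \<noteq> 0" "1 - C * (P * x) \<noteq> 0" "1 - D * (P * x) \<noteq> 0"
    using hyp_fac[OF H, of n] hyp_fac[OF H, of "Suc n"]
    by (simp_all add: P_def x_def B_def C_def D_def mult.assoc)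
  have r1: "rr A b c d p n = (1 - A * x) * (1 - b * x) * (1 - c * x) * (1 - d * x) * z
      / ((1 - P * x) * (1 - B * x) * (1 - C * x) * (1 - D * x))"
    by (simp add: rr_def P_def x_def B_def C_def D_def z_def)
  have r2: "rr (A * P) b c d p n = (1 - A * (P * x)) * (1 - b * x) * (1 - c * x) * (1 - d * x)
      * (z * P) / ((1 - P * x) * (1 - B * (P * x)) * (1 - C * (P * x)) * (1 - D * (P * x)))"
    by (simp add: rr_def P_def x_def B_def C_def D_def z_def mult_ac)
  have IH: "(1 - A) * tt (A * P) b c d p n = tt A b c d p n *
    ((1 - A * x) * (1 - B) * (1 - C) * (1 - D) * x / ((1 - B * x) * (1 - C * x) * (1 - D * x)))"
    using Suc.IH unfolding P_def[symmetric] B_def[symmetric] C_def[symmetric] D_def[symmetric]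
      x_def[symmetric] .
  have alg: "((1 - A * x) * (1 - B) * (1 - C) * (1 - D) * x / ((1 - B * x) * (1 - C * x) * (1 - D * x)))
     * ((1 - A * (P * x)) * (1 - b * x) * (1 - c * x) * (1 - d * x)
      * (z * P) / ((1 - P * x) * (1 - B * (P * x)) * (1 - C * (P * x)) * (1 - D * (P * x))))
    = ((1 - A * x) * (1 - b * x) * (1 - c * x) * (1 - d * x) * z
      / ((1 - P * x) * (1 - B * x) * (1 - C * x) * (1 - D * x)))
     * ((1 - A * (P * x)) * (1 - B) * (1 - C) * (1 - D) * (P * x)
        / ((1 - B * (P * x)) * (1 - C * (P * x)) * (1 - D * (P * x))))"
    using nz by (simp add: field_simps)
  have "(1 - A) * tt (A * P) b c d p (Suc n) = ((1 - A) * tt (A * P) b c d p n) * rr (A * P) b c d p n"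
    unfolding P_def by (simp add: tt_Suc[OF hyp_shift[OF H]])
  also have "\<dots> = tt A b c d p (Suc n) *
     ((1 - A * (P * x)) * (1 - B) * (1 - C) * (1 - D) * (P * x)
        / ((1 - B * (P * x)) * (1 - C * (P * x)) * (1 - D * (P * x))))"
    unfolding IH tt_Suc[OF H] r1 P_def[symmetric] r2 using alg by (simp add: mult_ac)
  finally show ?case unfolding P_def[symmetric] B_def[symmetric] C_def[symmetric] D_def[symmetric]
    power_Suc x_def[symmetric] .
qed

lemma gen_frac:
  fixes al be ga de N1 N2 Pi :: complex
  assumes "Pi \<noteq> 0" "al * Pi - be * N1 = - (ga * N2) + de * Pi"
  shows "al - be * (N1 / Pi) + ga * (N2 / Pi) - de = 0"
proof -
  have "al - be * (N1 / Pi) + ga * (N2 / Pi) - de = (al * Pi - be * N1 + ga * N2 - de * Pi) / Pi"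
    using assms(1) by (simp add: field_simps)
  also have "\<dots> = 0" using assms(2) by (simp add: algebra_simps)
  finally show ?thesis .
qed
lemma brk_uvw:
  fixes A uu yy ww P x :: complex
  assumes "1 - A*P*uu*x \<noteq> 0" "1 - A*P*yy*x \<noteq> 0" "1 - A*P*ww*x \<noteq> 0"
  shows "(1-A*P*uu*yy*ww)*(1-A*x*x) - ((1-A*P*uu*yy)*(1-A*P*uu*ww)*(1-A*P*yy*ww)*(1-A*P*x*x))*(((1-A*x)*x)/((1-A*P*uu*x)*(1-A*P*yy*x)*(1-A*P*ww*x)))
     + (1-A*(A*P*uu*yy*ww)*P*x)*(((1-A*x)*(A*P*(uu-x)*(yy-x)*(ww-x)))/((1-A*P*uu*x)*(1-A*P*yy*x)*(1-A*P*ww*x)))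
     - (1-x)*(1-A*(A*P*uu*yy*ww)*x) = 0"
proof (rule gen_frac)
  show "(1-A*P*uu*x)*(1-A*P*yy*x)*(1-A*P*ww*x) \<noteq> 0" using assms by simp
  show "(1-A*P*uu*yy*ww)*(1-A*x*x)*((1-A*P*uu*x)*(1-A*P*yy*x)*(1-A*P*ww*x)) - ((1-A*P*uu*yy)*(1-A*P*uu*ww)*(1-A*P*yy*ww)*(1-A*P*x*x))*((1-A*x)*x)
   = -((1-A*(A*P*uu*yy*ww)*P*x)*((1-A*x)*(A*P*(uu-x)*(yy-x)*(ww-x)))) + (1-x)*(1-A*(A*P*uu*yy*ww)*x)*((1-A*P*uu*x)*(1-A*P*yy*x)*(1-A*P*ww*x))"
    by (simp add: algebra_simps)
qed

lemma brk_bcd: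
  fixes A b c d P x :: complex
  assumes "b \<noteq> 0" "c \<noteq> 0" "d \<noteq> 0"
    "1 - A*P/b*x \<noteq> 0" "1 - A*P/c*x \<noteq> 0" "1 - A*P/d*x \<noteq> 0"
  shows "(1-A*P/(b*c*d))*(1-A*x*x) - ((1-A*P/(b*c))*(1-A*P/(b*d))*(1-A*P/(c*d))*(1-A*P*x*x))*(((1-A*x)*x)/((1-A*P/b*x)*(1-A*P/c*x)*(1-A*P/d*x)))
     + (1-A*(A*P/(b*c*d))*P*x)*(((1-A*x)*(1-b*x)*(1-c*x)*(1-d*x)*(A*P/(b*c*d)))/((1-A*P/b*x)*(1-A*P/c*x)*(1-A*P/d*x)))
     - (1-x)*(1-A*(A*P/(b*c*d))*x) = 0"
proof -
  have e1: "A*P*(1/b) = A*P/b" "A*P*(1/c) = A*P/c" "A*P*(1/d) = A*P/d" by simp_all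
  have e2: "A*P/b*(1/c) = A*P/(b*c)" "A*P/b*(1/d) = A*P/(b*d)" "A*P/c*(1/d) = A*P/(c*d)"
    by simp_all
  have e3: "A*P/(b*c)*(1/d) = A*P/(b*c*d)" by simp
  have e4: "(1-A*x)*(A*P*(1/b-x)*(1/c-x)*(1/d-x)) = (1-A*x)*(1-b*x)*(1-c*x)*(1-d*x)*(A*P/(b*c*d))"
    using assms(1-3) by (simp add: field_simps)
  show ?thesis
    using brk_uvw[of A P "1/b" x "1/c" "1/d"] assms(4-6) unfolding e1 e2 e3 e4 by simp
qed

lemma step6:
  assumes H: "hyp A b c d p"
  shows "(1 - A * of_real p / b) * (1 - A * of_real p / c) * (1 - A * of_real p / d)
      * (1 - A * of_real p / (b * c * d)) * suminf (t6 A b c d p)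
    = (1 - A) * ((1 - A * of_real p / (b * c)) * (1 - A * of_real p / (b * d))
      * (1 - A * of_real p / (c * d))) * suminf (t6 (A * of_real p) b c d p)"
proof -
  define P where "P = (of_real p :: complex)"
  define B where "B = A * P / b"
  define C where "C = A * P / c"
  define D where "D = A * P / d"
  define z where "z = A * P / (b * c * d)"
  define W where "W = (1 - B) * (1 - C) * (1 - D)"
  define K where "K = W * (1 - z)"
  define L2 where "L2 = (1 - A * P / (b * c)) * (1 - A * P / (b * d)) * (1 - A * P / (c * d))"
  define V where "V = (\<lambda>n. - (W * (1 - P ^ n) * (1 - A * z * P ^ n)) * tt A b c d p n)"
  have p: "0 < p" "p < 1" and bcd: "b \<noteq> 0" "c \<noteq> 0" "d \<noteq> 0" using hyp_p[OF H] by auto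
  have V0: "V 0 = 0" by (simp add: V_def)
  have xl: "(\<lambda>n. P ^ n) \<longlonglongrightarrow> 0" unfolding P_def using p by (intro LIMSEQ_power_zero) auto
  have "V \<longlonglongrightarrow> - (W * (1 - 0) * (1 - A * z * 0)) * 0"
    unfolding V_def
    by (rule tendsto_mult[OF tendsto_minus[OF tendsto_mult[OF tendsto_mult[OF tendsto_const
        tendsto_diff[OF tendsto_const xl]] tendsto_diff[OF tendsto_const tendsto_mult[OF tendsto_const xl]]]]
        tt_lim0[OF H]])
  then have Vlim: "V \<longlonglongrightarrow> 0" by simp
  have tel: "(\<lambda>n. V (Suc n) - V n) sums 0" using telescope_sums[OF Vlim] V0 by simp
  have ident: "K * t6 A b c d p n - (1 - A) * L2 * t6 (A * P) b c d p n = V (Suc n) - V n" for n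
  proof -
    define x where "x = P ^ n"
    define T where "T = tt A b c d p n"
    define g1 where "g1 = ((1 - A * x) * x) / ((1 - B * x) * (1 - C * x) * (1 - D * x))"
    define g2 where "g2 = ((1 - A * x) * (1 - b * x) * (1 - c * x) * (1 - d * x) * z)
       / ((1 - B * x) * (1 - C * x) * (1 - D * x))"
    have nz: "1 - P * x \<noteq> 0" "1 - B * x \<noteq> 0" "1 - C * x \<noteq> 0" "1 - D * x \<noteq> 0"
      using hyp_fac[OF H, of n] by (simp_all add: P_def x_def B_def C_def D_def)
    have br: "(1 - z) * (1 - A * x * x) - (L2 * (1 - A * P * x * x)) * g1
       + (1 - A * z * P * x) * g2 - (1 - x) * (1 - A * z * x) = 0"
      using brk_bcd[OF bcd, of A P x] nz
      unfolding g1_def g2_def L2_def z_def B_def C_def D_def by simp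
    have sr: "(1 - A) * tt (A * P) b c d p n = T * (W * g1)"
      using shift_rel[OF H, of n]
      unfolding P_def[symmetric] x_def[symmetric] B_def[symmetric] C_def[symmetric] D_def[symmetric]
        T_def[symmetric]
      by (simp add: W_def g1_def mult_ac)
    have e: "rr A b c d p n = ((1 - A * x) * (1 - b * x) * (1 - c * x) * (1 - d * x) * z)
       / ((1 - P * x) * ((1 - B * x) * (1 - C * x) * (1 - D * x)))"
      by (simp add: rr_def P_def x_def B_def C_def D_def z_def mult_ac)
    have rr: "(1 - P * x) * rr A b c d p n = g2"
      unfolding e g2_def using nz(1) by simp
    have VS: "V (Suc n) = - (W * (1 - A * z * (P * x))) * T * g2"
    proof -
      have "V (Suc n) = - (W * (1 - A * z * (P * x))) * T * ((1 - P * x) * rr A b c d p n)"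
        unfolding V_def by (simp add: tt_Suc[OF H] T_def x_def mult_ac)
      then show ?thesis unfolding rr .
    qed
    have Vn: "V n = - (W * (1 - x) * (1 - A * z * x)) * T" by (simp add: V_def x_def T_def)
    have p2: "P ^ (2 * n) = x * x" by (simp add: x_def power_add mult_2)
    have t1: "t6 A b c d p n = (1 - A * (x * x)) * T"
      unfolding t6_def P_def[symmetric] p2 T_def ..
    have t2: "(1 - A) * L2 * t6 (A * P) b c d p n = L2 * (1 - A * P * (x * x)) * (T * (W * g1))"
    proof -
      have "(1 - A) * L2 * t6 (A * P) b c d p n
          = L2 * (1 - A * P * (x * x)) * ((1 - A) * tt (A * P) b c d p n)"
        unfolding t6_def P_def[symmetric] p2 by (simp add: mult_ac)
      then show ?thesis unfolding sr .
    qed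
    have "K * t6 A b c d p n - (1 - A) * L2 * t6 (A * P) b c d p n - (V (Suc n) - V n)
        = T * W * ((1 - z) * (1 - A * x * x) - (L2 * (1 - A * P * x * x)) * g1
       + (1 - A * z * P * x) * g2 - (1 - x) * (1 - A * z * x))"
      unfolding t1 t2 VS Vn K_def by (simp add: algebra_simps)
    then show ?thesis unfolding br by simp
  qed
  have "(\<lambda>n. K * t6 A b c d p n - (1 - A) * L2 * t6 (A * P) b c d p n) sums
      (K * suminf (t6 A b c d p) - (1 - A) * L2 * suminf (t6 (A * P) b c d p))"
    unfolding P_def
    by (intro sums_diff sums_mult summable_sums t6_summable(2) H hyp_shift[OF H])
  then have "K * suminf (t6 A b c d p) - (1 - A) * L2 * suminf (t6 (A * P) b c d p) = 0"
    using sums_unique2[OF _ tel] unfolding ident by blast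
  then show ?thesis unfolding K_def W_def L2_def B_def C_def D_def z_def P_def
    by (simp add: algebra_simps)
qed

lemma hyp_pow:
  assumes H: "hyp A b c d p"
  shows "hyp (A * of_real p ^ k) b c d p"
proof (induction k)
  case 0 then show ?case using H by simp
next
  case (Suc k)
  have "A * of_real p ^ k * of_real p = A * of_real p ^ Suc k" by (simp add: mult_ac)
  with hyp_shift[OF Suc.IH] show ?case by simp
qed

lemma iter6:
  assumes H: "hyp A b c d p"
  shows "qp (A * of_real p / b) p k * qp (A * of_real p / c) p k * qp (A * of_real p / d) p k
      * qp (A * of_real p / (b * c * d)) p k * suminf (t6 A b c d p)
    = qp A p k * qp (A * of_real p / (b * c)) p k * qp (A * of_real p / (b * d)) p k
      * qp (A * of_real p / (c * d)) p k * suminf (t6 (A * of_real p ^ k) b c d p)"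
proof (induction k)
  case 0 then show ?case by simp
next
  case (Suc k)
  define P where "P = (of_real p :: complex)"
  define Ak where "Ak = A * P ^ k"
  have Hk: "hyp Ak b c d p" unfolding Ak_def P_def by (rule hyp_pow[OF H])
  have st: "(1 - Ak * P / b) * (1 - Ak * P / c) * (1 - Ak * P / d)
      * (1 - Ak * P / (b * c * d)) * suminf (t6 Ak b c d p)
    = (1 - Ak) * ((1 - Ak * P / (b * c)) * (1 - Ak * P / (b * d))
      * (1 - Ak * P / (c * d))) * suminf (t6 (Ak * P) b c d p)"
    using step6[OF Hk] unfolding P_def .
  have e: "Ak * P / e = A * P / e * P ^ k" for e by (simp add: Ak_def)
  have e2: "Ak * P = A * P ^ Suc k" by (simp add: Ak_def mult_ac)
  have IH: "qp (A * P / b) p k * qp (A * P / c) p k * qp (A * P / d) p k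
      * qp (A * P / (b * c * d)) p k * suminf (t6 A b c d p)
    = qp A p k * qp (A * P / (b * c)) p k * qp (A * P / (b * d)) p k
      * qp (A * P / (c * d)) p k * suminf (t6 Ak b c d p)"
    using Suc.IH unfolding P_def Ak_def .
  have qs: "qp w p (Suc k) = qp w p k * (1 - w * P ^ k)" for w
    by (simp add: qp_Suc P_def)
  have "qp (A * P / b) p (Suc k) * qp (A * P / c) p (Suc k) * qp (A * P / d) p (Suc k)
      * qp (A * P / (b * c * d)) p (Suc k) * suminf (t6 A b c d p)
    = ((1 - Ak * P / b) * (1 - Ak * P / c) * (1 - Ak * P / d) * (1 - Ak * P / (b * c * d)))
      * (qp (A * P / b) p k * qp (A * P / c) p k * qp (A * P / d) p k
      * qp (A * P / (b * c * d)) p k * suminf (t6 A b c d p))"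
    unfolding qs e by (simp add: mult_ac)
  also have "\<dots> = (qp A p k * qp (A * P / (b * c)) p k * qp (A * P / (b * d)) p k
      * qp (A * P / (c * d)) p k) * ((1 - Ak * P / b) * (1 - Ak * P / c) * (1 - Ak * P / d)
      * (1 - Ak * P / (b * c * d)) * suminf (t6 Ak b c d p))"
    unfolding IH by (simp add: mult_ac)
  also have "\<dots> = (qp A p k * qp (A * P / (b * c)) p k * qp (A * P / (b * d)) p k
      * qp (A * P / (c * d)) p k) * ((1 - Ak) * ((1 - Ak * P / (b * c)) * (1 - Ak * P / (b * d))
      * (1 - Ak * P / (c * d))) * suminf (t6 (Ak * P) b c d p))"
    unfolding st ..
  also have "\<dots> = qp A p (Suc k) * qp (A * P / (b * c)) p (Suc k) * qp (A * P / (b * d)) p (Suc k)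
      * qp (A * P / (c * d)) p (Suc k) * suminf (t6 (A * P ^ Suc k) b c d p)"
    unfolding qs e e2[symmetric] by (simp add: Ak_def mult_ac)
  finally show ?case unfolding P_def .
qed

lemma rr_bound:
  assumes H: "hyp A b c d p"
    and dB: "\<And>m. dB \<le> norm (1 - A * of_real p / b * of_real p ^ m)" and dBp: "dB > 0"
    and dC: "\<And>m. dC \<le> norm (1 - A * of_real p / c * of_real p ^ m)" and dCp: "dC > 0"
    and dD: "\<And>m. dD \<le> norm (1 - A * of_real p / d * of_real p ^ m)" and dDp: "dD > 0"
  shows "norm (rr (A * of_real p ^ k) b c d p n) \<le>
    (1 + norm A) * (1 + norm b) * (1 + norm c) * (1 + norm d) * (norm (A * of_real p / (b * c * d)) * p ^ k)
    / ((1 - p) * dB * dC * dD)"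
proof -
  have p: "0 < p" "p < 1" using hyp_p[OF H] by auto
  define P where "P = (of_real p :: complex)"
  define x where "x = P ^ n"
  have nx: "norm x = p ^ n" using p by (simp add: x_def P_def norm_power)
  have nx1: "norm x \<le> 1" unfolding nx using p by (simp add: power_le_one)
  have pk1: "p ^ k \<le> 1" using p by (simp add: power_le_one)
  have n1: "norm (1 - A * P ^ k * x) \<le> 1 + norm A"
  proof -
    have "norm (1 - A * P ^ k * x) \<le> 1 + norm (A * P ^ k * x)" by (metis norm_one norm_triangle_ineq4)
    also have "norm (A * P ^ k * x) = norm A * (p ^ k * norm x)" using p by (simp add: P_def norm_mult norm_power)
    also have "\<dots> \<le> norm A * 1" using p nx1 pk1
      by (intro mult_left_mono) (auto simp: mult_le_one)
    finally show ?thesis by simp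
  qed
  have n2: "norm (1 - e * x) \<le> 1 + norm e" for e
  proof -
    have "norm (1 - e * x) \<le> 1 + norm (e * x)" by (metis norm_one norm_triangle_ineq4)
    also have "norm (e * x) \<le> norm e * 1" unfolding norm_mult using nx1 by (intro mult_left_mono) auto
    finally show ?thesis by simp
  qed
  have nz: "norm (A * P ^ k * P / (b * c * d)) = norm (A * P / (b * c * d)) * p ^ k"
    using p by (simp add: P_def norm_mult norm_divide norm_power)
  have d1: "norm (1 - P * x) \<ge> 1 - p"
  proof -
    have "norm (1 - P * x) \<ge> 1 - norm (P * x)" using norm_triangle_ineq2[of 1 "P * x"] by simp
    moreover have "norm (P * x) \<le> p" using p nx1 by (simp add: P_def norm_mult mult_left_le)
    ultimately show ?thesis by simp
  qed
  have d2: "norm (1 - A * P ^ k * P / b * x) \<ge> dB" "norm (1 - A * P ^ k * P / c * x) \<ge> dC"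
       "norm (1 - A * P ^ k * P / d * x) \<ge> dD"
  proof -
    have eq: "A * P ^ k * P / e * x = A * P / e * P ^ (k + n)" for e
      by (simp add: x_def power_add mult_ac)
    show "norm (1 - A * P ^ k * P / b * x) \<ge> dB" unfolding eq unfolding P_def by (rule dB)
    show "norm (1 - A * P ^ k * P / c * x) \<ge> dC" unfolding eq unfolding P_def by (rule dC)
    show "norm (1 - A * P ^ k * P / d * x) \<ge> dD" unfolding eq unfolding P_def by (rule dD)
  qed
  have num: "norm ((1 - A * P ^ k * x) * (1 - b * x) * (1 - c * x) * (1 - d * x) * (A * P ^ k * P / (b * c * d)))
      \<le> (1 + norm A) * (1 + norm b) * (1 + norm c) * (1 + norm d) * (norm (A * P / (b * c * d)) * p ^ k)"
    unfolding norm_mult[of _ "A * P ^ k * P / (b * c * d)"] nz norm_mult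
    using p by (intro mult_mono n1 n2 mult_nonneg_nonneg) auto
  have den: "norm ((1 - P * x) * (1 - A * P ^ k * P / b * x) * (1 - A * P ^ k * P / c * x) * (1 - A * P ^ k * P / d * x))
      \<ge> (1 - p) * dB * dC * dD"
    unfolding norm_mult using p dBp dCp dDp
    by (intro mult_mono d1 d2 mult_nonneg_nonneg) auto
  have dpos: "(1 - p) * dB * dC * dD > 0" using p dBp dCp dDp by auto
  have rre: "rr (A * of_real p ^ k) b c d p n = ((1 - A * P ^ k * x) * (1 - b * x) * (1 - c * x) * (1 - d * x) * (A * P ^ k * P / (b * c * d)))
     / ((1 - P * x) * (1 - A * P ^ k * P / b * x) * (1 - A * P ^ k * P / c * x) * (1 - A * P ^ k * P / d * x))"
    by (simp add: rr_def P_def x_def)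
  have "norm ((1 - A * P ^ k * x) * (1 - b * x) * (1 - c * x) * (1 - d * x) * (A * P ^ k * P / (b * c * d)))
     / norm ((1 - P * x) * (1 - A * P ^ k * P / b * x) * (1 - A * P ^ k * P / c * x) * (1 - A * P ^ k * P / d * x))
     \<le> (1 + norm A) * (1 + norm b) * (1 + norm c) * (1 + norm d) * (norm (A * P / (b * c * d)) * p ^ k)
    / ((1 - p) * dB * dC * dD)"
    by (rule frac_le[OF _ num dpos den]) (use p in auto)
  then have "norm (((1 - A * P ^ k * x) * (1 - b * x) * (1 - c * x) * (1 - d * x) * (A * P ^ k * P / (b * c * d)))
     / ((1 - P * x) * (1 - A * P ^ k * P / b * x) * (1 - A * P ^ k * P / c * x) * (1 - A * P ^ k * P / d * x)))
     \<le> (1 + norm A) * (1 + norm b) * (1 + norm c) * (1 + norm d) * (norm (A * P / (b * c * d)) * p ^ k)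
    / ((1 - p) * dB * dC * dD)"
    by (simp only: norm_divide[symmetric])
  then show ?thesis unfolding rre P_def .
qed

lemma tt_geo:
  assumes H: "hyp A b c d p" and e: "\<And>n. norm (rr A b c d p n) \<le> e"
  shows "norm (tt A b c d p n) \<le> e ^ n"
proof (induction n)
  case 0 then show ?case by (simp add: tt_def)
next
  case (Suc n)
  have e0: "0 \<le> e" using e[of 0] norm_ge_zero order.trans by blast
  have "norm (tt A b c d p (Suc n)) = norm (tt A b c d p n) * norm (rr A b c d p n)"
    by (simp add: tt_Suc[OF H] norm_mult)
  also have "\<dots> \<le> e ^ n * e" using Suc.IH e[of n] e0 by (intro mult_mono) auto
  finally show ?case by (simp add: mult.commute)
qed

lemma lim_one:
  assumes H: "hyp A b c d p"
  shows "(\<lambda>k. suminf (t6 (A * of_real p ^ k) b c d p)) \<longlonglongrightarrow> 1"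
proof -
  have p: "0 < p" "p < 1" using hyp_p[OF H] by auto
  have fB: "\<And>k. 1 - A * of_real p / b * of_real (p ^ k) \<noteq> 0"
    and fC: "\<And>k. 1 - A * of_real p / c * of_real (p ^ k) \<noteq> 0"
    and fD: "\<And>k. 1 - A * of_real p / d * of_real (p ^ k) \<noteq> 0"
    using hyp_fac(2-4)[OF H] by simp_all
  obtain dB where dBp: "dB > 0" and dB: "\<And>m. dB \<le> norm (1 - A * of_real p / b * of_real p ^ m)"
    using inf_pos[OF p fB] by auto
  obtain dC where dCp: "dC > 0" and dC: "\<And>m. dC \<le> norm (1 - A * of_real p / c * of_real p ^ m)"
    using inf_pos[OF p fC] by auto
  obtain dD where dDp: "dD > 0" and dD: "\<And>m. dD \<le> norm (1 - A * of_real p / d * of_real p ^ m)"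
    using inf_pos[OF p fD] by auto
  define M where "M = (1 + norm A) * (1 + norm b) * (1 + norm c) * (1 + norm d)
      * norm (A * of_real p / (b * c * d)) / ((1 - p) * dB * dC * dD)"
  have M0: "M \<ge> 0" unfolding M_def using p dBp dCp dDp by auto
  have rb: "norm (rr (A * of_real p ^ k) b c d p n) \<le> M * p ^ k" for k n
    using rr_bound[OF H dB dBp dC dCp dD dDp, of k n] by (simp add: M_def)
  have t6b: "norm (t6 (A * of_real p ^ k) b c d p n) \<le> (1 + norm A) * (M * p ^ k) ^ n" for k n
  proof -
    have "norm (1 - A * of_real p ^ k * of_real p ^ (2 * n)) \<le> 1 + norm (A * of_real p ^ k * of_real p ^ (2 * n))"
      by (metis norm_one norm_triangle_ineq4)
    also have "norm (A * of_real p ^ k * of_real p ^ (2 * n)) = norm A * (p ^ k * p ^ (2 * n))"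
      using p by (simp add: norm_mult norm_power)
    also have "\<dots> \<le> norm A * 1"
      using p by (intro mult_left_mono mult_le_one power_le_one) auto
    finally have "norm (1 - A * of_real p ^ k * of_real p ^ (2 * n)) \<le> 1 + norm A" by simp
    moreover have "norm (tt (A * of_real p ^ k) b c d p n) \<le> (M * p ^ k) ^ n"
      by (rule tt_geo[OF hyp_pow[OF H] rb])
    ultimately show ?thesis unfolding t6_def norm_mult
      by (intro mult_mono) auto
  qed
  have Mlim: "(\<lambda>k. M * p ^ k) \<longlonglongrightarrow> 0"
    using p by (intro tendsto_mult_right_zero LIMSEQ_power_zero) auto
  have ev: "eventually (\<lambda>k. M * p ^ k < 1/2) sequentially"
    using order_tendstoD(2)[OF Mlim, of "1/2"] by simp
  have bnd: "norm (suminf (t6 (A * of_real p ^ k) b c d p) - 1)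
      \<le> norm A * p ^ k + (1 + norm A) * (M * p ^ k) * 2" if ek: "M * p ^ k < 1/2" for k
  proof -
    define e where "e = M * p ^ k"
    have e0: "0 \<le> e" using M0 p by (simp add: e_def)
    define f where "f = t6 (A * of_real p ^ k) b c d p"
    have sf: "summable f" unfolding f_def by (rule t6_summable(2)[OF hyp_pow[OF H]])
    have f0: "f 0 = 1 - A * of_real p ^ k" by (simp add: f_def t6_def tt_def)
    have sp: "suminf (\<lambda>n. f (Suc n)) = suminf f - f 0" by (rule suminf_split_head[OF sf])
    have gs: "(\<lambda>n. (1 + norm A) * e * (1/2) ^ n) sums ((1 + norm A) * e * (1 / (1 - 1/2)))"
      by (intro sums_mult geometric_sums) auto
    have fb: "norm (f (Suc n)) \<le> (1 + norm A) * e * (1/2) ^ n" for n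
    proof -
      have "norm (f (Suc n)) \<le> (1 + norm A) * e ^ Suc n" unfolding f_def e_def by (rule t6b)
      also have "e ^ Suc n = e * e ^ n" by simp
      also have "e ^ n \<le> (1/2) ^ n" using e0 ek unfolding e_def[symmetric]
        by (intro power_mono) auto
      then have "(1 + norm A) * (e * e ^ n) \<le> (1 + norm A) * e * (1/2) ^ n"
        using e0 by (simp add: mult.assoc mult_left_mono)
      finally show ?thesis .
    qed
    have "norm (suminf (\<lambda>n. f (Suc n))) \<le> (1 + norm A) * e * (1 / (1 - 1/2))"
      using norm_suminf_le[OF fb sums_summable[OF gs]] sums_unique[OF gs] by simp
    moreover have "suminf f - 1 = - (A * of_real p ^ k) + suminf (\<lambda>n. f (Suc n))"
      unfolding sp f0 by simp
    ultimately have "norm (suminf f - 1) \<le> norm (- (A * of_real p ^ k)) + (1 + norm A) * e * 2"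
      using norm_triangle_ineq[of "- (A * of_real p ^ k)" "suminf (\<lambda>n. f (Suc n))"] by simp
    then show ?thesis using p by (simp add: f_def e_def norm_mult norm_power)
  qed
  have "(\<lambda>k. suminf (t6 (A * of_real p ^ k) b c d p) - 1) \<longlonglongrightarrow> 0"
  proof (rule Lim_null_comparison)
    show "eventually (\<lambda>k. norm (suminf (t6 (A * of_real p ^ k) b c d p) - 1)
      \<le> norm A * p ^ k + (1 + norm A) * (M * p ^ k) * 2) sequentially"
      using ev by (rule eventually_mono) (rule bnd)
    have l1: "(\<lambda>k. norm A * p ^ k) \<longlonglongrightarrow> 0"
      using p by (intro tendsto_mult_right_zero LIMSEQ_power_zero) auto
    show "(\<lambda>k. norm A * p ^ k + (1 + norm A) * (M * p ^ k) * 2) \<longlonglongrightarrow> 0"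
      by (rule tendsto_add_zero[OF l1 tendsto_mult_left_zero[OF tendsto_mult_right_zero[OF Mlim]]])
  qed
  from tendsto_add[OF this tendsto_const[of 1]] show ?thesis by simp
qed

lemma sum6:
  assumes H: "hyp A b c d p"
  shows "t6 A b c d p sums
    (qpoch_inf A p * qpoch_inf (A * of_real p / (b * c)) p * qpoch_inf (A * of_real p / (b * d)) p
      * qpoch_inf (A * of_real p / (c * d)) p
     / (qpoch_inf (A * of_real p / b) p * qpoch_inf (A * of_real p / c) p
      * qpoch_inf (A * of_real p / d) p * qpoch_inf (A * of_real p / (b * c * d)) p))"
proof -
  have p: "0 < p" "p < 1" using hyp_p[OF H] by auto
  define S where "S = suminf (t6 A b c d p)"
  define z where "z = A * of_real p / (b * c * d)"
  have l1: "(\<lambda>k. qp (A * of_real p / b) p k * qp (A * of_real p / c) p k * qp (A * of_real p / d) p k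
      * qp z p k * S) \<longlonglongrightarrow>
      qpoch_inf (A * of_real p / b) p * qpoch_inf (A * of_real p / c) p
      * qpoch_inf (A * of_real p / d) p * qpoch_inf z p * S"
    by (intro tendsto_mult tendsto_const qp_lim p)
  have l2: "(\<lambda>k. qp A p k * qp (A * of_real p / (b * c)) p k * qp (A * of_real p / (b * d)) p k
      * qp (A * of_real p / (c * d)) p k * suminf (t6 (A * of_real p ^ k) b c d p)) \<longlonglongrightarrow>
      qpoch_inf A p * qpoch_inf (A * of_real p / (b * c)) p * qpoch_inf (A * of_real p / (b * d)) p
      * qpoch_inf (A * of_real p / (c * d)) p * 1"
    by (intro tendsto_mult qp_lim p lim_one[OF H])
  have eq: "qpoch_inf (A * of_real p / b) p * qpoch_inf (A * of_real p / c) p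
      * qpoch_inf (A * of_real p / d) p * qpoch_inf z p * S =
      qpoch_inf A p * qpoch_inf (A * of_real p / (b * c)) p * qpoch_inf (A * of_real p / (b * d)) p
      * qpoch_inf (A * of_real p / (c * d)) p * 1"
    using LIMSEQ_unique[OF l1[unfolded z_def S_def] l2[unfolded iter6[OF H, symmetric]]] unfolding S_def z_def .
  have nzB: "qpoch_inf (A * of_real p / b) p \<noteq> 0" "qpoch_inf (A * of_real p / c) p \<noteq> 0"
     "qpoch_inf (A * of_real p / d) p \<noteq> 0"
  proof -
    have fB: "\<And>k. 1 - A * of_real p / b * of_real (p ^ k) \<noteq> 0"
      and fC: "\<And>k. 1 - A * of_real p / c * of_real (p ^ k) \<noteq> 0"
      and fD: "\<And>k. 1 - A * of_real p / d * of_real (p ^ k) \<noteq> 0"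
      using hyp_fac(2-4)[OF H] by simp_all
    show "qpoch_inf (A * of_real p / b) p \<noteq> 0" "qpoch_inf (A * of_real p / c) p \<noteq> 0"
     "qpoch_inf (A * of_real p / d) p \<noteq> 0"
      using qpinf_nonzero[OF p fB] qpinf_nonzero[OF p fC] qpinf_nonzero[OF p fD] by auto
  qed
  have "1 - z * of_real (p ^ k) \<noteq> 0" for k
  proof
    assume "1 - z * of_real (p ^ k) = 0"
    then have "norm (z * of_real (p ^ k)) = 1" by (metis eq_iff_diff_eq_0 norm_one)
    moreover have "norm (z * of_real (p ^ k)) \<le> norm z * 1"
      using p unfolding norm_mult by (intro mult_left_mono) (auto simp: power_le_one norm_power)
    moreover have "norm z < 1" using hyp_p[OF H] by (simp add: z_def)
    ultimately show False by simp
  qed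
  then have nzz: "qpoch_inf z p \<noteq> 0" by (intro qpinf_nonzero p)
  have "S = qpoch_inf A p * qpoch_inf (A * of_real p / (b * c)) p * qpoch_inf (A * of_real p / (b * d)) p
      * qpoch_inf (A * of_real p / (c * d)) p
     / (qpoch_inf (A * of_real p / b) p * qpoch_inf (A * of_real p / c) p
      * qpoch_inf (A * of_real p / d) p * qpoch_inf z p)"
    using eq nzB nzz by (simp add: field_simps)
  moreover have "t6 A b c d p sums S" unfolding S_def by (rule summable_sums[OF t6_summable(2)[OF H]])
  ultimately show ?thesis by (simp add: z_def)
qed

lemma qpow_add: "qpow q (x + y) = qpow q x * qpow q y"
  by (simp add: qpow_def distrib_right exp_add)

lemma qpow_diff: "qpow q (x - y) = qpow q x / qpow q y"
  by (simp add: qpow_def left_diff_distrib exp_diff)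

lemma qpow_nz: "qpow q x \<noteq> 0"
  by (simp add: qpow_def)

lemma qpow_nat: "0 < q \<Longrightarrow> qpow q (of_nat n) = of_real (q ^ n)"
proof -
  assume q: "0 < q"
  have "qpow q (of_nat n) = exp (of_real (ln q)) ^ n"
    unfolding qpow_def by (rule exp_of_nat_mult)
  also have "exp (of_real (ln q) :: complex) = of_real q" using q by (simp add: exp_of_real)
  finally show ?thesis by simp
qed

lemma qpow_real: "qpow q (of_real r) = of_real (exp (r * ln q))"
  unfolding qpow_def of_real_mult[symmetric] exp_of_real ..

lemma E_nz:
  assumes "0 < q" "q < 1" "r > 0"
  shows "qpoch_inf (qpow q (of_real r)) (q^2) \<noteq> 0"
proof -
  define v where "v = exp (r * ln q)"
  have v: "0 < v" "v < 1" using assms by (auto simp: v_def ln_less_zero mult_pos_neg)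
  have q2: "0 < q^2" "q^2 < 1" using assms by (auto simp: power_less_one_iff)
  have "1 - of_real v * of_real ((q^2) ^ k) \<noteq> (0::complex)" for k
  proof
    assume "1 - of_real v * of_real ((q^2) ^ k) = (0::complex)"
    then have "of_real (v * (q^2) ^ k) = (1::complex)" by simp
    then have "v * (q^2) ^ k = 1" using of_real_eq_1_iff by blast
    moreover have "v * (q^2) ^ k < 1"
      using v q2 by (metis less_eq_real_def mult_less_le_imp_less mult_1_right power_le_one zero_less_power)
    ultimately show False by simp
  qed
  then show ?thesis unfolding qpow_real v_def[symmetric]
    by (intro qpinf_nonzero q2)
qed

lemma shift_E:
  assumes "qpoch_inf (of_real (q^2)) (q^2) \<noteq> 0" "qpoch_inf (qpow q (2 * x)) (q^2) \<noteq> 0"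
  shows "qshift2 q x \<alpha> = qpoch_inf (qpow q (2 * x)) (q^2) / qpoch_inf (qpow q (2 * (x + \<alpha>))) (q^2)
    * exp (- \<alpha> * of_real (ln (1 - q^2)))"
proof (cases "qpoch_inf (qpow q (2 * (x + \<alpha>))) (q^2) = 0")
  case True then show ?thesis by (simp add: qshift2_def qgamma2_def)
next
  case False
  have e: "exp ((1 - (x + \<alpha>)) * of_real (ln (1 - q^2))) = exp ((1 - x) * of_real (ln (1 - q^2)))
      * exp (- \<alpha> * of_real (ln (1 - q^2)))"
    by (subst exp_add[symmetric]) (simp add: algebra_simps)
  show ?thesis unfolding qshift2_def qgamma2_def e using assms False by (simp add: field_simps)
qed

lemma qpow2n: "0 < q \<Longrightarrow> qpow q (2 * of_nat n) = of_real ((q^2) ^ n)"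
  using qpow_nat[of q "2 * n"] by (simp add: power_mult)

lemma q2: "0 < q \<Longrightarrow> q < 1 \<Longrightarrow> 0 < q^2 \<and> q^2 < (1::real)"
  by (simp add: power_less_one_iff)

lemma qfact2_eq:
  assumes "0 < q" "q < 1"
  shows "qfact2 q n = qp (of_real (q^2)) (q^2) n / of_real ((1 - q^2) ^ n)"
proof (induction n)
  case 0 then show ?case by (simp add: qfact2_def)
next
  case (Suc n)
  have m: "1 - q^2 \<noteq> 0" using q2[OF assms] by simp
  have "qfact2 q (Suc n) = qfact2 q n * qnum2 q (of_nat (Suc n))"
    unfolding qfact2_def by (simp add: prod.cl_ivl_Suc)
  also have "qnum2 q (of_nat (Suc n)) = (1 - of_real ((q^2) ^ Suc n)) / of_real (1 - q^2)"
    unfolding qnum2_def qpow2n[OF assms(1)] ..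
  finally show ?case unfolding Suc.IH qp_Suc using m
    by (simp add: field_simps)
qed

lemma shiftn:
  assumes q: "0 < q" "q < 1" and P: "qpoch_inf (of_real (q^2)) (q^2) \<noteq> 0"
    and Ex: "qpoch_inf (qpow q (2 * x)) (q^2) \<noteq> 0"
    and Exa: "qpoch_inf (qpow q (2 * (x + \<alpha>))) (q^2) \<noteq> 0"
  shows "qshift2 q x (\<alpha> + of_nat n) = qshift2 q x \<alpha> * qp (qpow q (2 * (x + \<alpha>))) (q^2) n
     / of_real ((1 - q^2) ^ n)"
proof -
  define w where "w = qpow q (2 * (x + \<alpha>))"
  define l where "l = (of_real (ln (1 - q^2)) :: complex)"
  have w2: "qpow q (2 * (x + (\<alpha> + of_nat n))) = w * of_real ((q^2) ^ n)"
  proof -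
    have "2 * (x + (\<alpha> + of_nat n)) = 2 * (x + \<alpha>) + 2 * of_nat n" by (simp add: algebra_simps)
    then show ?thesis unfolding w_def by (simp add: qpow_add qpow2n[OF q(1)])
  qed
  have sh: "qpoch_inf w (q^2) = qp w (q^2) n * qpoch_inf (w * of_real ((q^2) ^ n)) (q^2)"
    using q2[OF q] by (intro qpinf_shift) auto
  have qpnz: "qp w (q^2) n \<noteq> 0" using sh Exa unfolding w_def by auto
  have m: "1 - q^2 > 0" using q2[OF q] by simp
  have el: "exp l = of_real (1 - q^2)" using m by (simp add: l_def exp_of_real)
  have ex: "exp (- (\<alpha> + of_nat n) * l) = exp (- \<alpha> * l) / of_real ((1 - q^2) ^ n)"
  proof -
    have "exp (- (\<alpha> + of_nat n) * l) = exp (- \<alpha> * l) / exp (of_nat n * l)"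
      by (simp add: algebra_simps exp_diff[symmetric])
    also have "exp (of_nat n * l) = exp l ^ n" by (rule exp_of_nat_mult)
    finally show ?thesis unfolding el by simp
  qed
  have "qshift2 q x (\<alpha> + of_nat n) = qpoch_inf (qpow q (2 * x)) (q^2)
     / qpoch_inf (w * of_real ((q^2) ^ n)) (q^2) * exp (- (\<alpha> + of_nat n) * l)"
    unfolding shift_E[OF P Ex] w2 l_def ..
  also have "\<dots> = qpoch_inf (qpow q (2 * x)) (q^2) / qpoch_inf w (q^2) * exp (- \<alpha> * l)
       * qp w (q^2) n / of_real ((1 - q^2) ^ n)"
    unfolding ex sh using qpnz by (simp add: field_simps)
  also have "\<dots> = qshift2 q x \<alpha> * qp w (q^2) n / of_real ((1 - q^2) ^ n)"
    unfolding shift_E[OF P Ex] w_def l_def ..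
  finally show ?thesis unfolding w_def .
qed

lemma alg_term:
  fixes X Sa Sb Sc Sd Qa Qb Qc Qd M m QP QB QC QD T1 T2 T3 Z :: complex
  assumes "M \<noteq> 0" "m \<noteq> 0" "QP \<noteq> 0" "QB \<noteq> 0" "QC \<noteq> 0" "QD \<noteq> 0" "T1 \<noteq> 0" "T2 \<noteq> 0" "T3 \<noteq> 0"
  shows "X * (Sa * Qa / M) * (Sb * Qb / M) * (Sc * Qc / M) * (Sd * Qd / M)
     / (m * (QP / M) * (T1 * QB / M) * (T2 * QC / M) * (T3 * QD / M)) * Z
   = (Sa * Sb * Sc * Sd / (m * T1 * T2 * T3)) * (X * (Qa * Qb * Qc * Qd / (QP * QB * QC * QD) * Z))"
  using assms by (simp add: field_simps)

lemma alg_final: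
  fixes Eh E3 E23 E1 E76 E56 Eha Ehb E3c E23d E1ab E76ac E56ad Es Eabc Eabd Eacd m r Q4
    ea eb ec ed eab eac ead es1 eabd eabc eacd :: complex
  assumes nz: "Eh \<noteq> 0" "E3 \<noteq> 0" "E23 \<noteq> 0" "E1 \<noteq> 0" "E76 \<noteq> 0" "E56 \<noteq> 0" "Eha \<noteq> 0"
    "Ehb \<noteq> 0" "E3c \<noteq> 0" "E23d \<noteq> 0" "E1ab \<noteq> 0" "E76ac \<noteq> 0" "E56ad \<noteq> 0" "Es \<noteq> 0"
    "Eabc \<noteq> 0" "Eabd \<noteq> 0" "Eacd \<noteq> 0" "m \<noteq> 0" "r \<noteq> 0" "Q4 \<noteq> 0"
    "ea \<noteq> 0" "eb \<noteq> 0" "ec \<noteq> 0" "ed \<noteq> 0" "eab \<noteq> 0" "eac \<noteq> 0" "ead \<noteq> 0" "es1 \<noteq> 0"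
    "eabd \<noteq> 0" "eabc \<noteq> 0" "eacd \<noteq> 0"
  and ex: "ea * eabd * eabc * eacd * m = es1 * eab * eac * ead"
  shows "(Eh / Eha * ea) * (Eh / Ehb * eb) * (E3 / E3c * ec) * (E23 / E23d * ed)
      / (m * (E1 / E1ab * eab) * (E76 / E76ac * eac) * (E56 / E56ad * ead))
      * (Eha * Eabc * Eabd * Eacd / (E1ab * E76ac * E56ad * Es))
    = (Eh / Ehb * eb) * (E3 / E3c * ec) * (E23 / E23d * ed) * (E1 / Es * es1)
      / ((E3 / Eabd * eabd) * (E23 / Eabc * eabc) * (Eh / Eacd * eacd))
      * (r / m * E23 * E3 * Q4 / ((r * E76) * E56 * (m * Q4 * E1 ^ 2 / Eh ^ 2)))"
proof -
  have "ea * m = es1 * eab * eac * ead / (eabd * eabc * eacd)"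
    using ex nz by (simp add: field_simps)
  then show ?thesis using nz by (simp add: field_simps power2_eq_square)
qed

theorem theorem3p2:
  fixes q :: real and a b c d :: complex
  assumes q0: "0 < q" and q1: "q < 1"
    and re: "Re (a + b + c + d) > 0"
    and poles_sum: "\<And>n::nat. \<forall>x \<in> {1/2 + a + of_nat n, 1/2 + of_nat n - b, 1/3 + of_nat n - c,
                2/3 + of_nat n - d, 1 + a + b + of_nat n, 7/6 + a + c + of_nat n,
                5/6 + a + d + of_nat n}. \<not> qgamma2_pole q x"
    and poles_rhs: "\<forall>x \<in> {1/2 - b, 1/3 - c, 2/3 - d, a + b + c + d,
                1/3 + a + b + d, 2/3 + a + b + c, 1/2 + a + c + d}. \<not> qgamma2_pole q x"
  shows "(\<lambda>n::nat.
      (1 - qpow q (4 * of_nat n + 2 * a + 1)) * qshift2 q (1/2) (a + of_nat n)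
        * qshift2 q (1/2) (of_nat n - b) * qshift2 q (1/3) (of_nat n - c)
        * qshift2 q (2/3) (of_nat n - d)
      / (of_real (1 - q^2) * qfact2 q n * qshift2 q 1 (a + b + of_nat n)
        * qshift2 q (7/6) (a + c + of_nat n) * qshift2 q (5/6) (a + d + of_nat n))
      * qpow q (2 * (a + b + c + d) * of_nat n))
    sums
     (qshift2 q (1/2) (- b) * qshift2 q (1/3) (- c) * qshift2 q (2/3) (- d)
        * qshift2 q 1 (a + b + c + d - 1)
      / (qshift2 q (1/3) (a + b + d) * qshift2 q (2/3) (a + b + c) * qshift2 q (1/2) (a + c + d))
      * (qnum2 q (1/6) * qpoch_inf (qpow q (4/3)) (q^2) * qpoch_inf (qpow q (2/3)) (q^2)
           * qpow q (1/4)
         / (qpoch_inf (qpow q (1/3)) (q^2) * qpoch_inf (qpow q (5/3)) (q^2) * pi_q q)))"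
proof -
  have q: "0 < q" "q < 1" using q0 q1 by auto
  have q2': "0 < q^2" "q^2 < (1::real)" using q2[OF q] by auto
  define l where "l = (of_real (ln (1 - q^2)) :: complex)"
  define P where "P = (of_real (q^2) :: complex)"
  have P2: "P = qpow q 2" using qpow_nat[OF q(1), of 2] by (simp add: P_def)
  have Ec: "qpoch_inf (qpow q (2 * c0)) (q^2) \<noteq> 0" if "c0 = of_real r" "r > 0" for c0 r
  proof -
    have "qpow q (2 * c0) = qpow q (of_real (2 * r))" using that by simp
    then show ?thesis using E_nz[OF q, of "2 * r"] that by simp
  qed
  have Eh: "qpoch_inf (qpow q (2 * (1/2))) (q^2) \<noteq> 0" by (rule Ec[of _ "1/2"]) auto
  have E3: "qpoch_inf (qpow q (2 * (1/3))) (q^2) \<noteq> 0" by (rule Ec[of _ "1/3"]) auto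
  have E23: "qpoch_inf (qpow q (2 * (2/3))) (q^2) \<noteq> 0" by (rule Ec[of _ "2/3"]) auto
  have E1: "qpoch_inf (qpow q (2 * 1)) (q^2) \<noteq> 0" by (rule Ec[of _ "1"]) auto
  have E76: "qpoch_inf (qpow q (2 * (7/6))) (q^2) \<noteq> 0" by (rule Ec[of _ "7/6"]) auto
  have E56: "qpoch_inf (qpow q (2 * (5/6))) (q^2) \<noteq> 0" by (rule Ec[of _ "5/6"]) auto
  have P0: "qpoch_inf (of_real (q^2)) (q^2) \<noteq> 0" using E1 P2 by (simp add: P_def)
  have ps0: "\<forall>x \<in> {1/2 + a, 1/2 - b, 1/3 - c, 2/3 - d, 1 + a + b, 7/6 + a + c, 5/6 + a + d}.
      qpoch_inf (qpow q (2 * x)) (q^2) \<noteq> 0"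
    using poles_sum[of 0] by (simp add: qgamma2_pole_def)
  have prhs: "\<forall>x \<in> {1/2 - b, 1/3 - c, 2/3 - d, a + b + c + d,
                1/3 + a + b + d, 2/3 + a + b + c, 1/2 + a + c + d}. qpoch_inf (qpow q (2 * x)) (q^2) \<noteq> 0"
    using poles_rhs by (simp add: qgamma2_pole_def)
  have Eha: "qpoch_inf (qpow q (2 * (1/2 + a))) (q^2) \<noteq> 0" using ps0 by simp
  have Ehb: "qpoch_inf (qpow q (2 * (1/2 + - b))) (q^2) \<noteq> 0" using ps0 by simp
  have E3c: "qpoch_inf (qpow q (2 * (1/3 + - c))) (q^2) \<noteq> 0" using ps0 by simp
  have E23d: "qpoch_inf (qpow q (2 * (2/3 + - d))) (q^2) \<noteq> 0" using ps0 by simp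
  have E1ab: "qpoch_inf (qpow q (2 * (1 + (a + b)))) (q^2) \<noteq> 0" using ps0 by (simp add: add.assoc)
  have E76ac: "qpoch_inf (qpow q (2 * (7/6 + (a + c)))) (q^2) \<noteq> 0" using ps0 by (simp add: add.assoc)
  have E56ad: "qpoch_inf (qpow q (2 * (5/6 + (a + d)))) (q^2) \<noteq> 0" using ps0 by (simp add: add.assoc)
  have Es: "qpoch_inf (qpow q (2 * (a + b + c + d))) (q^2) \<noteq> 0" using prhs by simp
  have Eabc: "qpoch_inf (qpow q (2 * (2/3 + (a + b + c)))) (q^2) \<noteq> 0" using prhs by (simp add: add.assoc)
  have Eabd: "qpoch_inf (qpow q (2 * (1/3 + (a + b + d)))) (q^2) \<noteq> 0" using prhs by (simp add: add.assoc)
  have Eacd: "qpoch_inf (qpow q (2 * (1/2 + (a + c + d)))) (q^2) \<noteq> 0" using prhs by (simp add: add.assoc)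
  define A where "A = qpow q (2 * (1/2 + a))"
  define bb where "bb = qpow q (2 * (1/2 + - b))"
  define cc where "cc = qpow q (2 * (1/3 + - c))"
  define dd where "dd = qpow q (2 * (2/3 + - d))"
  have rB: "A * P / bb = qpow q (2 * (1 + (a + b)))"
  proof -
    have "A * P / bb = qpow q (2 * (1/2 + a) + 2 - 2 * (1/2 + - b))"
      by (simp only: A_def bb_def P2 qpow_add[symmetric] qpow_diff[symmetric])
    also have "\<dots> = qpow q (2 * (1 + (a + b)))" by (rule arg_cong[where f="qpow q"]) (simp add: algebra_simps)
    finally show ?thesis .
  qed
  have rC: "A * P / cc = qpow q (2 * (7/6 + (a + c)))"
  proof -
    have "A * P / cc = qpow q (2 * (1/2 + a) + 2 - 2 * (1/3 + - c))"
      by (simp only: A_def cc_def P2 qpow_add[symmetric] qpow_diff[symmetric])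
    also have "\<dots> = qpow q (2 * (7/6 + (a + c)))" by (rule arg_cong[where f="qpow q"]) (simp add: algebra_simps)
    finally show ?thesis .
  qed
  have rD: "A * P / dd = qpow q (2 * (5/6 + (a + d)))"
  proof -
    have "A * P / dd = qpow q (2 * (1/2 + a) + 2 - 2 * (2/3 + - d))"
      by (simp only: A_def dd_def P2 qpow_add[symmetric] qpow_diff[symmetric])
    also have "\<dots> = qpow q (2 * (5/6 + (a + d)))" by (rule arg_cong[where f="qpow q"]) (simp add: algebra_simps)
    finally show ?thesis .
  qed
  have rbc: "A * P / (bb * cc) = qpow q (2 * (2/3 + (a + b + c)))"
  proof -
    have "A * P / (bb * cc) = qpow q (2 * (1/2 + a) + 2 - (2 * (1/2 + - b) + 2 * (1/3 + - c)))"
      by (simp only: A_def bb_def cc_def P2 qpow_add[symmetric] qpow_diff[symmetric])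
    also have "\<dots> = qpow q (2 * (2/3 + (a + b + c)))" by (rule arg_cong[where f="qpow q"]) (simp add: algebra_simps)
    finally show ?thesis .
  qed
  have rbd: "A * P / (bb * dd) = qpow q (2 * (1/3 + (a + b + d)))"
  proof -
    have "A * P / (bb * dd) = qpow q (2 * (1/2 + a) + 2 - (2 * (1/2 + - b) + 2 * (2/3 + - d)))"
      by (simp only: A_def bb_def dd_def P2 qpow_add[symmetric] qpow_diff[symmetric])
    also have "\<dots> = qpow q (2 * (1/3 + (a + b + d)))" by (rule arg_cong[where f="qpow q"]) (simp add: algebra_simps)
    finally show ?thesis .
  qed
  have rcd: "A * P / (cc * dd) = qpow q (2 * (1/2 + (a + c + d)))"
  proof -
    have "A * P / (cc * dd) = qpow q (2 * (1/2 + a) + 2 - (2 * (1/3 + - c) + 2 * (2/3 + - d)))"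
      by (simp only: A_def cc_def dd_def P2 qpow_add[symmetric] qpow_diff[symmetric])
    also have "\<dots> = qpow q (2 * (1/2 + (a + c + d)))" by (rule arg_cong[where f="qpow q"]) (simp add: algebra_simps)
    finally show ?thesis .
  qed
  have rz: "A * P / (bb * cc * dd) = qpow q (2 * (a + b + c + d))"
  proof -
    have "A * P / (bb * cc * dd) = qpow q (2 * (1/2 + a) + 2 - (2 * (1/2 + - b) + 2 * (1/3 + - c) + 2 * (2/3 + - d)))"
      by (simp only: A_def bb_def cc_def dd_def P2 qpow_add[symmetric] qpow_diff[symmetric])
    also have "\<dots> = qpow q (2 * (a + b + c + d))" by (rule arg_cong[where f="qpow q"]) (simp add: algebra_simps)
    finally show ?thesis .
  qed
  \<comment> \<open>the hypothesis of the 6phi5 summation\<close>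
  have H: "hyp A bb cc dd (q^2)"
  proof -
    have f1: "1 - A * of_real (q^2) / bb * of_real (q^2) ^ k \<noteq> 0" for k
      using qpinf_nz_factor[OF q2' E1ab, of k] unfolding rB[symmetric] P_def of_real_power .
    have f2: "1 - A * of_real (q^2) / cc * of_real (q^2) ^ k \<noteq> 0" for k
      using qpinf_nz_factor[OF q2' E76ac, of k] unfolding rC[symmetric] P_def of_real_power .
    have f3: "1 - A * of_real (q^2) / dd * of_real (q^2) ^ k \<noteq> 0" for k
      using qpinf_nz_factor[OF q2' E56ad, of k] unfolding rD[symmetric] P_def of_real_power .
    have "norm (qpow q (2 * (a + b + c + d))) = exp (Re (2 * (a + b + c + d)) * ln q)"
      by (simp add: qpow_def norm_exp_eq_Re)
    also have "\<dots> < 1" using re q by (simp add: mult_pos_neg ln_less_zero)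
    finally have "norm (A * of_real (q^2) / (bb * cc * dd)) < 1" unfolding P_def[symmetric] rz .
    then show ?thesis unfolding hyp_def using q2' f1 f2 f3
      by (simp add: bb_def cc_def dd_def qpow_nz)
  qed
  note S6 = sum6[OF H]
  define Kc where "Kc = qshift2 q (1/2) a * qshift2 q (1/2) (- b) * qshift2 q (1/3) (- c) * qshift2 q (2/3) (- d)
     / (of_real (1 - q^2) * qshift2 q 1 (a + b) * qshift2 q (7/6) (a + c) * qshift2 q (5/6) (a + d))"
  have T1: "qshift2 q 1 (a + b) \<noteq> 0"
    unfolding shift_E[OF P0 E1] using E1 E1ab by simp
  have T2: "qshift2 q (7/6) (a + c) \<noteq> 0"
    unfolding shift_E[OF P0 E76] using E76 E76ac by simp
  have T3: "qshift2 q (5/6) (a + d) \<noteq> 0"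
    unfolding shift_E[OF P0 E56] using E56 E56ad by simp
  have termeq: "(1 - qpow q (4 * of_nat n + 2 * a + 1)) * qshift2 q (1/2) (a + of_nat n)
        * qshift2 q (1/2) (of_nat n - b) * qshift2 q (1/3) (of_nat n - c)
        * qshift2 q (2/3) (of_nat n - d)
      / (of_real (1 - q^2) * qfact2 q n * qshift2 q 1 (a + b + of_nat n)
        * qshift2 q (7/6) (a + c + of_nat n) * qshift2 q (5/6) (a + d + of_nat n))
      * qpow q (2 * (a + b + c + d) * of_nat n) = Kc * t6 A bb cc dd (q^2) n" for n
  proof -
    have s1: "qshift2 q (1/2) (a + of_nat n) = qshift2 q (1/2) a * qp A (q^2) n / of_real ((1 - q^2) ^ n)"
      unfolding A_def by (rule shiftn[OF q P0 Eh Eha])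
    have s2: "qshift2 q (1/2) (of_nat n - b) = qshift2 q (1/2) (- b) * qp bb (q^2) n / of_real ((1 - q^2) ^ n)"
      using shiftn[OF q P0 Eh Ehb, of n] unfolding bb_def by simp
    have s3: "qshift2 q (1/3) (of_nat n - c) = qshift2 q (1/3) (- c) * qp cc (q^2) n / of_real ((1 - q^2) ^ n)"
      using shiftn[OF q P0 E3 E3c, of n] unfolding cc_def by simp
    have s4: "qshift2 q (2/3) (of_nat n - d) = qshift2 q (2/3) (- d) * qp dd (q^2) n / of_real ((1 - q^2) ^ n)"
      using shiftn[OF q P0 E23 E23d, of n] unfolding dd_def by simp
    have s5: "qshift2 q 1 (a + b + of_nat n) = qshift2 q 1 (a + b) * qp (A * P / bb) (q^2) n / of_real ((1 - q^2) ^ n)"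
      unfolding rB by (rule shiftn[OF q P0 E1 E1ab])
    have s6: "qshift2 q (7/6) (a + c + of_nat n) = qshift2 q (7/6) (a + c) * qp (A * P / cc) (q^2) n / of_real ((1 - q^2) ^ n)"
      unfolding rC by (rule shiftn[OF q P0 E76 E76ac])
    have s7: "qshift2 q (5/6) (a + d + of_nat n) = qshift2 q (5/6) (a + d) * qp (A * P / dd) (q^2) n / of_real ((1 - q^2) ^ n)"
      unfolding rD by (rule shiftn[OF q P0 E56 E56ad])
    have f: "qfact2 q n = qp P (q^2) n / of_real ((1 - q^2) ^ n)"
      unfolding P_def by (rule qfact2_eq[OF q])
    have pw: "qpow q (4 * of_nat n + 2 * a + 1) = A * P ^ (2 * n)"
    proof -
      have e: "4 * of_nat n + 2 * a + 1 = 2 * (1/2 + a) + 2 * of_nat (2 * n)" by simp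
      show ?thesis unfolding e qpow_add qpow2n[OF q(1)] A_def[symmetric] P_def of_real_power ..
    qed
    have zw: "qpow q (2 * (a + b + c + d) * of_nat n) = (A * P / (bb * cc * dd)) ^ n"
      unfolding rz qpow_def by (simp add: exp_of_nat_mult[symmetric] mult_ac)
    have nzr: "(1 - q^2) ^ n \<noteq> (0::real)" "1 - q^2 \<noteq> (0::real)" using q2' by auto
    have nzs: "of_real ((1 - q^2) ^ n) \<noteq> (0::complex)" "of_real (1 - q^2) \<noteq> (0::complex)"
      using nzr by (simp_all only: of_real_eq_0_iff not_False_eq_True)
    have nzq: "qp P (q^2) n \<noteq> 0" "qp (A * P / bb) (q^2) n \<noteq> 0" "qp (A * P / cc) (q^2) n \<noteq> 0"
      "qp (A * P / dd) (q^2) n \<noteq> 0"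
      using hyp_nz[OF H, of n] unfolding P_def by auto
    show ?thesis
      unfolding s1 s2 s3 s4 s5 s6 s7 f pw zw Kc_def t6_def tt_def P_def[symmetric]
      by (rule alg_term[OF nzs(1) nzs(2) nzq T1 T2 T3])
  qed
  have sums1: "(\<lambda>n. Kc * t6 A bb cc dd (q^2) n) sums (Kc * (qpoch_inf A (q^2) * qpoch_inf (A * P / (bb * cc)) (q^2)
      * qpoch_inf (A * P / (bb * dd)) (q^2) * qpoch_inf (A * P / (cc * dd)) (q^2)
     / (qpoch_inf (A * P / bb) (q^2) * qpoch_inf (A * P / cc) (q^2)
      * qpoch_inf (A * P / dd) (q^2) * qpoch_inf (A * P / (bb * cc * dd)) (q^2))))"
    using sums_mult[OF S6, of Kc] unfolding P_def .
  have final: "Kc * (qpoch_inf A (q^2) * qpoch_inf (A * P / (bb * cc)) (q^2)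
      * qpoch_inf (A * P / (bb * dd)) (q^2) * qpoch_inf (A * P / (cc * dd)) (q^2)
     / (qpoch_inf (A * P / bb) (q^2) * qpoch_inf (A * P / cc) (q^2)
      * qpoch_inf (A * P / dd) (q^2) * qpoch_inf (A * P / (bb * cc * dd)) (q^2)))
    = qshift2 q (1/2) (- b) * qshift2 q (1/3) (- c) * qshift2 q (2/3) (- d)
        * qshift2 q 1 (a + b + c + d - 1)
      / (qshift2 q (1/3) (a + b + d) * qshift2 q (2/3) (a + b + c) * qshift2 q (1/2) (a + c + d))
      * (qnum2 q (1/6) * qpoch_inf (qpow q (4/3)) (q^2) * qpoch_inf (qpow q (2/3)) (q^2)
           * qpow q (1/4)
         / (qpoch_inf (qpow q (1/3)) (q^2) * qpoch_inf (qpow q (5/3)) (q^2) * pi_q q))"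
  proof -
    have es: "qpow q (2 * (1 + (a + b + c + d - 1))) = qpow q (2 * (a + b + c + d))"
      by (rule arg_cong[where f="qpow q"]) simp
    have w1: "qpow q (4/3) = qpow q (2 * (2/3))" "qpow q (2/3) = qpow q (2 * (1/3))"
      "qpow q (1/3) = qpow q (2 * (1/6))" "qpow q (5/3) = qpow q (2 * (5/6))" by simp_all
    have w2: "of_real (q^2) = qpow q (2 * 1)" using P2 by (simp add: P_def)
    have w3: "of_real q = qpow q (2 * (1/2))" using qpow_nat[OF q(1), of 1] by simp
    have E16: "qpoch_inf (qpow q (2 * (1/6))) (q^2) = (1 - qpow q (2 * (1/6))) * qpoch_inf (qpow q (2 * (7/6))) (q^2)"
    proof -
      have "qpow q (2 * (1/6)) * of_real (q^2) = qpow q (2 * (1/6) + 2)"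
        unfolding P_def[symmetric] P2 qpow_add ..
      also have "\<dots> = qpow q (2 * (7/6))" by (rule arg_cong[where f="qpow q"]) simp
      finally show ?thesis using qpinf_Suc[OF q2', of "qpow q (2 * (1/6))"] by simp
    qed
    have r: "1 - qpow q (2 * (1/6)) \<noteq> 0"
    proof
      assume "1 - qpow q (2 * (1/6)) = 0"
      then have "qpow q (of_real (1/3)) = 1" by simp
      then have "exp (1/3 * ln q) = 1" unfolding qpow_real by (metis of_real_eq_1_iff)
      moreover have "exp (1/3 * ln q) < 1" using q by (simp add: ln_less_zero mult_pos_neg)
      ultimately show False by simp
    qed
    have m: "of_real (1 - q^2) \<noteq> (0::complex)" using q2' by (simp only: of_real_eq_0_iff)
    have el: "exp (of_real (ln (1 - q^2))) = (of_real (1 - q^2) :: complex)"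
      using q2' by (simp add: exp_of_real)
    have ex: "exp (- a * of_real (ln (1 - q^2))) * exp (- (a + b + d) * of_real (ln (1 - q^2)))
       * exp (- (a + b + c) * of_real (ln (1 - q^2))) * exp (- (a + c + d) * of_real (ln (1 - q^2)))
       * of_real (1 - q^2)
     = exp (- (a + b + c + d - 1) * of_real (ln (1 - q^2))) * exp (- (a + b) * of_real (ln (1 - q^2)))
       * exp (- (a + c) * of_real (ln (1 - q^2))) * exp (- (a + d) * of_real (ln (1 - q^2)))"
      unfolding el[symmetric] exp_add[symmetric] by (rule arg_cong[where f=exp]) (simp add: algebra_simps)
    have qA: "qpoch_inf A (q^2) = qpoch_inf (qpow q (2 * (1/2 + a))) (q^2)" by (simp add: A_def)
    show ?thesis
      unfolding Kc_def shift_E[OF P0 Eh] shift_E[OF P0 E3] shift_E[OF P0 E23] shift_E[OF P0 E1]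
        shift_E[OF P0 E76] shift_E[OF P0 E56] es
        qA rB rC rD rz rbc rbd rcd qnum2_def pi_q_def w1 w2 w3 E16
      by (rule alg_final[OF Eh E3 E23 E1 E76 E56 Eha Ehb E3c E23d E1ab E76ac E56ad Es Eabc Eabd Eacd
          m r qpow_nz exp_not_eq_zero exp_not_eq_zero exp_not_eq_zero exp_not_eq_zero exp_not_eq_zero
          exp_not_eq_zero exp_not_eq_zero exp_not_eq_zero exp_not_eq_zero exp_not_eq_zero exp_not_eq_zero ex])
  qed
  show ?thesis using sums1 final unfolding termeq[symmetric] by simp
qed

end
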